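(* Let $m\ge 2$ and $k\ge 0$ be integers. The inner multiplicity $\gamma_{\lambda_k}(\vec 0)$ of the zero weight in the irrep $\lambda_k$ of $\mathrm{SU}(m)$ (i.e. the dimension of its zero-weight space, equivalently the number of semistandard Young tableaux of shape $(2k,k,\dots,k,0)$ with entries in $\{1,\dots,m\}$ in which every entry $1,\dots,m$ occurs equally often) is $$\gamma_{\lambda_k}(\vec 0)=\binom{k+m-2}{k}.$$
   Context: For $k\in\mathbb N$, $\lambda_k$ denotes the irreducible representation of $\mathrm{SU}(m)$ with Young diagram $(2k,k,\dots,k,0)$, i.e. first row of $2k$ boxes, rows $2,\dots,m-1$ of $k$ boxes each, and empty $m$-th row. Weights are taken with respect to the diagonal maximal torus of $\mathrm{SU}(m)$; the inner multiplicity of a weight is the dimension of the corresponding weight space. *)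

theory Defs
  imports Main
begin

definition lam_shape :: "nat \<Rightarrow> nat \<Rightarrow> nat \<Rightarrow> nat" where
  "lam_shape m k i = (if i = 0 then 2*k else if i < m - 1 then k else 0)"

definition cells :: "nat \<Rightarrow> (nat \<Rightarrow> nat) \<Rightarrow> (nat \<times> nat) set" where
  "cells m sh = {(i,j). i < m \<and> j < sh i}"

definition ssyt :: "nat \<Rightarrow> (nat \<Rightarrow> nat) \<Rightarrow> (nat \<times> nat \<Rightarrow> nat) \<Rightarrow> bool" where
  "ssyt m sh T \<longleftrightarrow>
     (\<forall>c \<in> cells m sh. T c \<in> {1..m}) \<and>
     (\<forall>c. c \<notin> cells m sh \<longrightarrow> T c = 0) \<and>
     (\<forall>i j. (i, Suc j) \<in> cells m sh \<longrightarrow> T (i,j) \<le> T (i, Suc j)) \<and>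
     (\<forall>i j. (Suc i, j) \<in> cells m sh \<longrightarrow> T (i,j) < T (Suc i, j))"

definition content :: "nat \<Rightarrow> (nat \<Rightarrow> nat) \<Rightarrow> (nat \<times> nat \<Rightarrow> nat) \<Rightarrow> nat \<Rightarrow> nat" where
  "content m sh T a = card {c \<in> cells m sh. T c = a}"

definition zero_weight_mult :: "nat \<Rightarrow> nat \<Rightarrow> nat" where
  "zero_weight_mult m k = card {T. ssyt m (lam_shape m k) T \<and>
      (\<forall>a \<in> {1..m}. \<forall>b \<in> {1..m}. content m (lam_shape m k) T a = content m (lam_shape m k) T b)}"

end

theory Submission
  imports Defs "HOL-Library.Multiset"
begin

definition gcol :: "nat \<Rightarrow> nat \<Rightarrow> nat" where
  "gcol i x = (if Suc i < x then Suc i else Suc (Suc i))"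

definition hidx :: "nat \<Rightarrow> nat \<Rightarrow> nat" where
  "hidx a x = (if a < x then a - 1 else a - 2)"

lemma cells_lam:
  assumes "m \<ge> 2"
  shows "(i,j) \<in> cells m (lam_shape m k) \<longleftrightarrow> (i < m-1 \<and> j < k) \<or> (i = 0 \<and> k \<le> j \<and> j < 2*k)"
  using assms by (auto simp: cells_def lam_shape_def)

lemma gcol_eq:
  assumes "a \<in> {1..m}" "x \<in> {1..m}"
  shows "(i < m-1 \<and> gcol i x = a) \<longleftrightarrow> (x \<noteq> a \<and> i = hidx a x)"
  using assms by (auto simp: gcol_def hidx_def)

lemma gcol_range:
  assumes "i < m-1" "x \<in> {2..m}"
  shows "gcol i x \<in> {1..m}"
  using assms by (auto simp: gcol_def)

lemma gcol_anti: "x \<le> y \<Longrightarrow> gcol i y \<le> gcol i x"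
  by (auto simp: gcol_def)

lemma gcol_strict: "gcol i x < gcol (Suc i) x"
  by (auto simp: gcol_def)

lemma column:
  fixes f :: "nat \<Rightarrow> nat"
  assumes m: "m \<ge> 2" and rng: "\<forall>i<m-1. f i \<in> {1..m}"
    and inc: "\<forall>i. Suc i < m-1 \<longrightarrow> f i < f (Suc i)"
  shows "\<exists>x\<in>{1..m}. \<forall>i<m-1. f i = gcol i x"
proof -
  have low: "i < m-1 \<Longrightarrow> f i \<ge> Suc i" for i
  proof (induction i)
    case 0 then show ?case using rng by auto
  next
    case (Suc i) then show ?case using inc[rule_format, of i] by auto
  qed
  have top: "d \<le> m-2 \<Longrightarrow> f (m-2-d) + d \<le> f (m-2)" for d
  proof (induction d)
    case 0 then show ?case by simp
  next
    case (Suc d)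
    have "Suc (m - 2 - Suc d) = m-2-d" using Suc.prems by arith
    then have "f (m-2-Suc d) < f (m-2-d)" using inc[rule_format, of "m-2-Suc d"] Suc.prems m by auto
    then show ?case using Suc by auto
  qed
  have up: "i < m-1 \<Longrightarrow> f i \<le> Suc (Suc i)" for i
  proof -
    assume i: "i < m-1"
    have e: "m-2-(m-2-i) = i" using i by arith
    have "f i + (m-2-i) \<le> f (m-2)" using top[of "m-2-i"] i unfolding e by simp
    moreover have "f (m-2) \<le> m" using rng m by auto
    ultimately show ?thesis using i by arith
  qed
  define i0 where "i0 = (LEAST i. i = m-1 \<or> f i = Suc (Suc i))"
  have i0le: "i0 \<le> m-1" unfolding i0_def by (rule Least_le) simp
  have i0P: "i0 = m-1 \<or> f i0 = Suc (Suc i0)" unfolding i0_def by (rule LeastI[of _ "m-1"]) simp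
  have below: "i < i0 \<Longrightarrow> f i = Suc i" for i
  proof -
    assume "i < i0"
    then have "\<not> (i = m-1 \<or> f i = Suc (Suc i))" unfolding i0_def using not_less_Least by blast
    then show ?thesis using low[of i] up[of i] \<open>i < i0\<close> i0le by auto
  qed
  have above: "i0 \<le> i \<Longrightarrow> i < m-1 \<Longrightarrow> f i = Suc (Suc i)" for i
  proof (induction i rule: dec_induct)
    case base then show ?case using i0P by auto
  next
    case (step i)
    then show ?case using inc[rule_format, of i] up[of "Suc i"] by auto
  qed
  show ?thesis
  proof (intro bexI[of _ "Suc i0"] allI impI)
    fix i assume "i < m-1"
    then show "f i = gcol i (Suc i0)"
      using below[of i] above[of i] by (auto simp: gcol_def)
  next
    show "Suc i0 \<in> {1..m}" using i0le m by auto
  qed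
qed

lemma content_formula:
  assumes m: "m \<ge> 2" and a: "a \<in> {1..m}" and X: "\<forall>j<k. X j \<in> {1..m}"
    and tall: "\<forall>i j. i<m-1 \<longrightarrow> j<k \<longrightarrow> T(i,j) = gcol i (X j)"
    and right: "\<forall>j<k. T(0,k+j) = Y j"
  shows "int (content m (lam_shape m k) T a) = int k - int (card {j. j<k \<and> X j = a}) + int (card {j. j<k \<and> Y j = a})"
proof -
  let ?C = "{c \<in> cells m (lam_shape m k). T c = a}"
  define A where "A = (\<lambda>j. (hidx a (X j), j)) ` {j. j<k \<and> X j \<noteq> a}"
  define B where "B = (\<lambda>j. (0::nat, k+j)) ` {j. j<k \<and> Y j = a}"
  have "?C = A \<union> B"
  proof (rule set_eqI)
    fix c :: "nat \<times> nat" obtain i j where c: "c = (i,j)" by force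
    show "c \<in> ?C \<longleftrightarrow> c \<in> A \<union> B"
    proof
      assume "c \<in> ?C"
      then have cc: "(i,j) \<in> cells m (lam_shape m k)" and Ta: "T(i,j) = a" using c by auto
      from cc have "(i < m-1 \<and> j < k) \<or> (i=0 \<and> k \<le> j \<and> j < 2*k)" using cells_lam[OF m] by blast
      then show "c \<in> A \<union> B"
      proof
        assume h: "i < m-1 \<and> j < k"
        then have "gcol i (X j) = a" using tall Ta by auto
        then have "X j \<noteq> a \<and> i = hidx a (X j)" using gcol_eq[OF a, of "X j" i] X h by auto
        then show ?thesis using h c unfolding A_def by auto
      next
        assume h: "i=0 \<and> k \<le> j \<and> j < 2*k"
        then have "Y (j-k) = a" using right[rule_format, of "j-k"] Ta by auto
        then have "(i,j) = (0, k + (j-k)) \<and> j-k < k \<and> Y (j-k) = a" using h by auto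
        then show ?thesis using c unfolding B_def by blast
      qed
    next
      assume "c \<in> A \<union> B"
      then show "c \<in> ?C"
      proof
        assume "c \<in> A"
        then obtain j where j: "j<k" "X j \<noteq> a" "c = (hidx a (X j), j)" unfolding A_def by auto
        then have "hidx a (X j) < m-1 \<and> gcol (hidx a (X j)) (X j) = a" using gcol_eq[OF a, of "X j"] X by auto
        then show ?thesis using j tall cells_lam[OF m] by auto
      next
        assume "c \<in> B"
        then obtain j where j: "j<k" "Y j = a" "c = (0, k+j)" unfolding B_def by auto
        then show ?thesis using right cells_lam[OF m] by auto
      qed
    qed
  qed
  moreover have "A \<inter> B = {}" unfolding A_def B_def by auto
  moreover have "finite A" "finite B" unfolding A_def B_def by auto
  ultimately have "card ?C = card A + card B" by (simp add: card_Un_disjoint)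
  moreover have "card A = card {j. j<k \<and> X j \<noteq> a}" unfolding A_def by (rule card_image) (auto simp: inj_on_def)
  moreover have "card B = card {j. j<k \<and> Y j = a}" unfolding B_def by (rule card_image) (auto simp: inj_on_def)
  moreover have "card {j. j<k \<and> X j \<noteq> a} + card {j. j<k \<and> X j = a} = k"
  proof -
    have "{j. j<k \<and> X j \<noteq> a} \<union> {j. j<k \<and> X j = a} = {..<k}" by auto
    then have "card ({j. j<k \<and> X j \<noteq> a} \<union> {j. j<k \<and> X j = a}) = k" by simp
    then show ?thesis by (subst (asm) card_Un_disjoint) auto
  qed
  ultimately show ?thesis unfolding content_def by linarith
qed

lemma sum_counts:
  assumes "\<forall>j<k. X j \<in> A" "finite A"
  shows "(\<Sum>a\<in>A. card {j. j<k \<and> X j = a}) = k"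
proof -
  have "{..<k} = (\<Union>a\<in>A. {j. j<k \<and> X j = a})" using assms by auto
  then have "k = card (\<Union>a\<in>A. {j. j<k \<and> X j = a})" by (metis card_lessThan)
  also have "\<dots> = (\<Sum>a\<in>A. card {j. j<k \<and> X j = a})" by (rule card_UN_disjoint) (auto simp: assms)
  finally show ?thesis by simp
qed

definition build :: "nat \<Rightarrow> nat \<Rightarrow> nat list \<Rightarrow> nat \<times> nat \<Rightarrow> nat" where
  "build m k L = (\<lambda>(i,j). if i < m-1 \<and> j < k then gcol i (L!(k-1-j))
      else if i=0 \<and> k \<le> j \<and> j < 2*k then L!(j-k) else 0)"

lemma build_in:
  assumes m: "m \<ge> 2" and L: "length L = k" "sorted L" "set L \<subseteq> {2..m}"
  shows "ssyt m (lam_shape m k) (build m k L) \<and>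
    (\<forall>a\<in>{1..m}. \<forall>b\<in>{1..m}. content m (lam_shape m k) (build m k L) a = content m (lam_shape m k) (build m k L) b)"
proof -
  have Ln: "j < k \<Longrightarrow> L!j \<in> {2..m}" for j using L nth_mem by blast
  have Lmono: "i \<le> j \<Longrightarrow> j < k \<Longrightarrow> L!i \<le> L!j" for i j using L sorted_iff_nth_mono by blast
  note cl = cells_lam[OF m]
  have Ln': "j < k \<Longrightarrow> L!(k - Suc j) \<in> {1..m}" for j using Ln[of "k - Suc j"] by auto
  have Lr: "k \<le> b \<Longrightarrow> b < 2*k \<Longrightarrow> 1 \<le> L!(b-k) \<and> L!(b-k) \<le> m" for b
  proof -
    assume "k \<le> b" "b < 2*k"
    then have "b - k < k" by arith
    then show ?thesis using Ln[of "b-k"] by auto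
  qed
  have cont: "content m (lam_shape m k) (build m k L) a = k" if a: "a \<in> {1..m}" for a
  proof -
    have c1: "int (content m (lam_shape m k) (build m k L) a) = int k - int (card {j. j<k \<and> L!(k-1-j) = a}) + int (card {j. j<k \<and> L!j = a})"
    proof (rule content_formula[OF m a])
      show "\<forall>j<k. L!(k-1-j) \<in> {1..m}" using Ln' by simp
      show "\<forall>i j. i<m-1 \<longrightarrow> j<k \<longrightarrow> build m k L (i,j) = gcol i (L!(k-1-j))" by (simp add: build_def)
      show "\<forall>j<k. build m k L (0,k+j) = L!j" using m by (simp add: build_def)
    qed
    have e: "{j. j<k \<and> L!j = a} = (\<lambda>j. k-1-j) ` {j. j<k \<and> L!(k-1-j) = a}"
    proof (rule set_eqI, rule iffI)
      fix j assume "j \<in> {j. j<k \<and> L!j = a}"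
      then have "k-1-(k-1-j) = j" "k-1-j < k" "L!(k-1-(k-1-j)) = a" by auto
      then show "j \<in> (\<lambda>j. k-1-j) ` {j. j<k \<and> L!(k-1-j) = a}"
        by (metis (mono_tags, lifting) image_eqI mem_Collect_eq)
    next
      fix j assume "j \<in> (\<lambda>j. k-1-j) ` {j. j<k \<and> L!(k-1-j) = a}"
      then obtain i where "i < k" "L!(k-1-i) = a" "j = k-1-i" by blast
      then show "j \<in> {j. j<k \<and> L!j = a}" by simp
    qed
    have inj: "inj_on (\<lambda>j. k-1-j) {j. j<k \<and> L!(k-1-j) = a}"
      by (rule inj_onI) (clarsimp, linarith)
    have "card {j. j<k \<and> L!j = a} = card {j. j<k \<and> L!(k-1-j) = a}"
      unfolding e using inj by (rule card_image)
    then show ?thesis using c1 by linarith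
  qed
  have ss: "ssyt m (lam_shape m k) (build m k L)"
    unfolding ssyt_def
  proof (intro conjI allI impI ballI)
    fix c assume "c \<in> cells m (lam_shape m k)"
    then show "build m k L c \<in> {1..m}"
      using cl Ln gcol_range Lr by (cases c) (auto simp: build_def)
  next
    fix c assume "c \<notin> cells m (lam_shape m k)"
    then show "build m k L c = 0" using cl by (cases c) (auto simp: build_def)
  next
    fix i j assume h: "(i, Suc j) \<in> cells m (lam_shape m k)"
    then consider "i < m-1" "Suc j < k" | "i = 0" "Suc j = k" | "i = 0" "k < Suc j" "Suc j < 2*k"
      using cl by fastforce
    then show "build m k L (i,j) \<le> build m k L (i, Suc j)"
    proof cases
      case 1 then show ?thesis using Lmono[of "k-1-Suc j" "k-1-j"] gcol_anti
        by (auto simp: build_def)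
    next
      case 2 then show ?thesis using Ln[of 0] m by (auto simp: build_def gcol_def)
    next
      case 3 then show ?thesis using Lmono[of "j-k" "Suc j - k"] m by (auto simp: build_def Suc_diff_le)
    qed
  next
    fix i j assume h: "(Suc i, j) \<in> cells m (lam_shape m k)"
    then have "Suc i < m-1" "j < k" using cl by auto
    then show "build m k L (i,j) < build m k L (Suc i, j)" using gcol_strict by (auto simp: build_def)
  qed
  show ?thesis using ss cont by auto
qed

lemma count_map_upt: "count (mset (map f [0..<k])) a = card {j. j<k \<and> f j = a}"
proof (induction k)
  case 0 show ?case by simp
next
  case (Suc k)
  show ?case
  proof (cases "f k = a")
    case True
    then have "{j. j<Suc k \<and> f j = a} = insert k {j. j<k \<and> f j = a}" by (auto simp: less_Suc_eq)
    then show ?thesis using Suc True by simp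
  next
    case False
    then have "{j. j<Suc k \<and> f j = a} = {j. j<k \<and> f j = a}" by (auto simp: less_Suc_eq)
    then show ?thesis using Suc False by simp
  qed
qed

lemma S_build:
  assumes m: "m \<ge> 2" and ss: "ssyt m (lam_shape m k) T"
    and eq: "\<forall>a\<in>{1..m}. \<forall>b\<in>{1..m}. content m (lam_shape m k) T a = content m (lam_shape m k) T b"
  shows "\<exists>L. length L = k \<and> sorted L \<and> set L \<subseteq> {2..m} \<and> T = build m k L"
proof -
  note cl = cells_lam[OF m]
  have vals: "\<And>c. c \<in> cells m (lam_shape m k) \<Longrightarrow> T c \<in> {1..m}"
   and zero: "\<And>c. c \<notin> cells m (lam_shape m k) \<Longrightarrow> T c = 0"
   and row: "\<And>i j. (i, Suc j) \<in> cells m (lam_shape m k) \<Longrightarrow> T(i,j) \<le> T(i,Suc j)"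
   and col: "\<And>i j. (Suc i, j) \<in> cells m (lam_shape m k) \<Longrightarrow> T(i,j) < T(Suc i,j)"
    using ss unfolding ssyt_def by blast+
  have ex: "\<exists>x\<in>{1..m}. \<forall>i<m-1. T(i,j) = gcol i x" if j: "j<k" for j
  proof (rule column[OF m])
    show "\<forall>i<m-1. T(i,j) \<in> {1..m}" using vals cl j by auto
    show "\<forall>i. Suc i < m-1 \<longrightarrow> T(i,j) < T(Suc i,j)" using col cl j by auto
  qed
  have "\<forall>j. \<exists>x. j<k \<longrightarrow> x \<in> {1..m} \<and> (\<forall>i<m-1. T(i,j) = gcol i x)" using ex by blast
  then obtain X where X': "\<forall>j. j<k \<longrightarrow> X j \<in> {1..m} \<and> (\<forall>i<m-1. T(i,j) = gcol i (X j))"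
    by (rule choice[THEN exE]) blast
  have Xr: "j<k \<Longrightarrow> X j \<in> {1..m}" for j using X' by blast
  have XT: "j<k \<Longrightarrow> i<m-1 \<Longrightarrow> T(i,j) = gcol i (X j)" for i j using X' by blast
  define Y where "Y j = T(0,k+j)" for j
  have Yr: "j<k \<Longrightarrow> Y j \<in> {1..m}" for j unfolding Y_def using vals cl by auto
  have rowmono: "j \<le> j' \<Longrightarrow> (i,j') \<in> cells m (lam_shape m k) \<Longrightarrow> T(i,j) \<le> T(i,j')" for i j j'
  proof (induction j' rule: dec_induct)
    case base show ?case by simp
  next
    case (step n)
    have "(i,n) \<in> cells m (lam_shape m k)" using step.prems cl m by auto
    then show ?case using step row[of i n] by auto
  qed
  have Xanti: "X j' \<le> X j" if h: "j \<le> j'" "j' < k" for j j'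
  proof (rule ccontr)
    assume h2: "\<not> X j' \<le> X j"
    define i where "i = X j - 1"
    have "X j \<ge> 1" "X j' \<le> m" using Xr h by auto
    then have i: "i < m-1" "Suc i = X j" using h h2 i_def by auto
    have "(i,j') \<in> cells m (lam_shape m k)" using cl i h by auto
    then have "T(i,j) \<le> T(i,j')" using rowmono h by auto
    moreover have "T(i,j) = Suc(Suc i)" using XT[of j i] i h by (auto simp: gcol_def)
    moreover have "T(i,j') = Suc i" using XT[of j' i] i h h2 by (auto simp: gcol_def)
    ultimately show False by simp
  qed
  define nx where "nx a = card {j. j<k \<and> X j = a}" for a
  define ny where "ny a = card {j. j<k \<and> Y j = a}" for a
  define c where "c a = content m (lam_shape m k) T a" for a
  have cf: "int (c a) = int k - int (nx a) + int (ny a)" if a: "a\<in>{1..m}" for a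
    unfolding c_def nx_def ny_def
  proof (rule content_formula[OF m a])
    show "\<forall>j<k. X j \<in> {1..m}" using Xr by blast
    show "\<forall>i j. i<m-1 \<longrightarrow> j<k \<longrightarrow> T(i,j) = gcol i (X j)" using XT by blast
    show "\<forall>j<k. T(0,k+j) = Y j" unfolding Y_def by blast
  qed
  have sx: "(\<Sum>a\<in>{1..m}. nx a) = k" unfolding nx_def by (rule sum_counts) (use Xr in auto)
  have sy: "(\<Sum>a\<in>{1..m}. ny a) = k" unfolding ny_def by (rule sum_counts) (use Yr in auto)
  have sx': "(\<Sum>a\<in>{1..m}. int (nx a)) = int k" using sx by (metis of_nat_sum)
  have sy': "(\<Sum>a\<in>{1..m}. int (ny a)) = int k" using sy by (metis of_nat_sum)
  have one: "(1::nat) \<in> {1..m}" using m by simp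
  have ceq: "a\<in>{1..m} \<Longrightarrow> c a = c 1" for a using eq one unfolding c_def by blast
  have "(\<Sum>a\<in>{1..m}. int (c a)) = (\<Sum>a\<in>{1..m}. int (c 1))" by (rule sum.cong[OF refl]) (metis ceq)
  also have "\<dots> = int m * int (c 1)" by simp
  finally have s1: "(\<Sum>a\<in>{1..m}. int (c a)) = int m * int (c 1)" .
  have "(\<Sum>a\<in>{1..m}. int (c a)) = (\<Sum>a\<in>{1..m}. int k - int (nx a) + int (ny a))"
    using cf by (intro sum.cong) auto
  also have "\<dots> = (\<Sum>a\<in>{1..m}. int k) - (\<Sum>a\<in>{1..m}. int (nx a)) + (\<Sum>a\<in>{1..m}. int (ny a))"
    by (simp add: sum.distrib sum_subtractf)
  also have "\<dots> = int m * int k" using sx' sy' by simp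
  finally have s2: "(\<Sum>a\<in>{1..m}. int (c a)) = int m * int k" .
  have "int m * int (c 1) = int m * int k" using s1 s2 by linarith
  then have c1: "c 1 = k" using m by simp
  have nxy: "nx a = ny a" for a
  proof (cases "a \<in> {1..m}")
    case True
    then show ?thesis using cf[OF True] ceq[OF True] c1 by simp
  next
    case False
    then have e0: "{j. j<k \<and> X j = a} = {}" "{j. j<k \<and> Y j = a} = {}" using Xr Yr by auto
    then show ?thesis unfolding nx_def ny_def e0 by simp
  qed
  define xs where "xs = map X [0..<k]"
  define ys where "ys = map Y [0..<k]"
  have ms: "mset (rev xs) = mset ys"
  proof (rule multiset_eqI)
    fix a show "count (mset (rev xs)) a = count (mset ys) a"
      using nxy[of a] unfolding xs_def ys_def nx_def ny_def mset_rev count_map_upt .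
  qed
  have sy: "sorted ys" unfolding sorted_iff_nth_mono
  proof (intro allI impI)
    fix i j assume "i \<le> j" "j < length ys"
    then show "ys!i \<le> ys!j" unfolding ys_def Y_def using rowmono[of "k+i" "k+j" 0] cl by auto
  qed
  have sx: "sorted (rev xs)" unfolding sorted_rev_iff_nth_mono
  proof (intro allI impI)
    fix i j assume "i \<le> j" "j < length xs"
    then show "xs!j \<le> xs!i" unfolding xs_def using Xanti by auto
  qed
  have eqyx: "ys = rev xs" using properties_for_sort[OF ms sx] sorted_sort_id[OF sy] by simp
  have YX: "Y j = X (k-1-j)" if "j<k" for j
  proof -
    have "Y j = ys!j" using that ys_def by simp
    also have "\<dots> = rev xs ! j" using eqyx by simp
    also have "\<dots> = xs ! (length xs - Suc j)" using that xs_def by (simp add: rev_nth)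
    also have "\<dots> = X (k-1-j)" using that xs_def by simp
    finally show ?thesis .
  qed
  have X2: "X j \<ge> 2" if j: "j<k" for j
  proof -
    have kp: "0 < k" using j by simp
    have "(0, Suc (k-1)) \<in> cells m (lam_shape m k)" using cl kp m by auto
    then have "T(0,k-1) \<le> T(0,k)" using row[of 0 "k-1"] kp by simp
    moreover have "T(0,k-1) = gcol 0 (X (k-1))" using XT[of "k-1" 0] kp m by simp
    moreover have "T(0,k) = X (k-1)" using YX[of 0] kp unfolding Y_def by simp
    ultimately have "X (k-1) \<ge> 2" using Xr[of "k-1"] kp by (auto simp: gcol_def split: if_splits)
    moreover have "X (k-1) \<le> X j" using Xanti[of j "k-1"] j by simp
    ultimately show ?thesis by simp
  qed
  have lys: "length ys = k" unfolding ys_def by simp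
  have yn: "j<k \<Longrightarrow> ys!j = Y j" for j unfolding ys_def by simp
  have setys: "set ys \<subseteq> {2..m}"
  proof
    fix y assume "y \<in> set ys"
    then obtain j where j: "j<k" "y = Y j" unfolding ys_def by auto
    then have "y = X (k-1-j)" using YX by simp
    moreover have "k-1-j < k" using j by simp
    ultimately show "y \<in> {2..m}" using X2 Xr by fastforce
  qed
  have "T = build m k ys"
  proof (rule ext)
    fix c :: "nat \<times> nat"
    obtain i j where c: "c = (i,j)" by force
    consider "i < m-1 \<and> j < k" | "i = 0 \<and> k \<le> j \<and> j < 2*k" | "(i,j) \<notin> cells m (lam_shape m k)"
      using cl by blast
    then show "T c = build m k ys c"
    proof cases
      case 1
      then have "ys!(k-1-j) = X j" using yn[of "k-1-j"] YX[of "k-1-j"] by simp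
      then show ?thesis using 1 c XT[of j i] by (simp add: build_def)
    next
      case 2
      then have "j - k < k" by arith
      then have "ys!(j-k) = T(0,j)" using yn[of "j-k"] 2 unfolding Y_def by simp
      then show ?thesis using 2 c m by (simp add: build_def)
    next
      case 3
      then have "\<not> (i < m-1 \<and> j < k) \<and> \<not> (i = 0 \<and> k \<le> j \<and> j < 2*k)" using cl by blast
      then show ?thesis using 3 c zero by (auto simp: build_def)
    qed
  qed
  then show ?thesis using lys sy setys by blast
qed

lemma build_inj: "inj_on (build m k) {L. length L = k \<and> sorted L \<and> set L \<subseteq> {2..m}}"
proof (rule inj_onI)
  fix L1 L2 assume L1: "L1 \<in> {L. length L = k \<and> sorted L \<and> set L \<subseteq> {2..m}}"
    and L2: "L2 \<in> {L. length L = k \<and> sorted L \<and> set L \<subseteq> {2..m}}"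
    and eq: "build m k L1 = build m k L2"
  show "L1 = L2"
  proof (rule nth_equalityI)
    show "length L1 = length L2" using L1 L2 by simp
  next
    fix j assume "j < length L1"
    then have j: "j < k" using L1 by simp
    have "build m k L1 (0,k+j) = build m k L2 (0,k+j)" using eq by simp
    then show "L1!j = L2!j" using j by (simp add: build_def)
  qed
qed

lemma card_Ls:
  assumes m: "m \<ge> 2"
  shows "card {L. length L = k \<and> sorted L \<and> set L \<subseteq> {2..m}} = (k + m - 2) choose k"
proof -
  let ?Ls = "{L. length L = k \<and> sorted L \<and> set L \<subseteq> {2..m::nat}}"
  have lsl: "length (sorted_list_of_multiset M) = size M" for M :: "nat multiset"
    by (metis size_mset mset_sorted_list_of_multiset)
  have "bij_betw mset ?Ls (multisets_of_size {2..m} k)"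
  proof (rule bij_betw_byWitness[where f'=sorted_list_of_multiset])
    show "\<forall>a\<in>?Ls. sorted_list_of_multiset (mset a) = a" by (simp add: sorted_sort_id)
    show "\<forall>a'\<in>multisets_of_size {2..m} k. mset (sorted_list_of_multiset a') = a'" by simp
    show "mset ` ?Ls \<subseteq> multisets_of_size {2..m} k" by (auto simp: multisets_of_size_def)
    show "sorted_list_of_multiset ` multisets_of_size {2..m} k \<subseteq> ?Ls"
      by (auto simp: multisets_of_size_def lsl)
  qed
  then have "card ?Ls = card (multisets_of_size {2..m} k)" by (rule bij_betw_same_card)
  also have "\<dots> = (card {2..m} + k - 1) choose k" by (rule card_multisets_of_size) simp
  also have "card {2..m} + k - 1 = k + m - 2" using m by simp
  finally show ?thesis .
qed

theorem lemmaT3: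
  fixes m k :: nat
  assumes "m \<ge> 2"
  shows "zero_weight_mult m k = (k + m - 2) choose k"
proof -
  let ?Ls = "{L. length L = k \<and> sorted L \<and> set L \<subseteq> {2..m::nat}}"
  have "{T. ssyt m (lam_shape m k) T \<and>
      (\<forall>a \<in> {1..m}. \<forall>b \<in> {1..m}. content m (lam_shape m k) T a = content m (lam_shape m k) T b)}
    = build m k ` ?Ls"
  proof
    show "build m k ` ?Ls \<subseteq> {T. ssyt m (lam_shape m k) T \<and>
      (\<forall>a \<in> {1..m}. \<forall>b \<in> {1..m}. content m (lam_shape m k) T a = content m (lam_shape m k) T b)}"
      using build_in[OF assms] by blast
    show "{T. ssyt m (lam_shape m k) T \<and>
      (\<forall>a \<in> {1..m}. \<forall>b \<in> {1..m}. content m (lam_shape m k) T a = content m (lam_shape m k) T b)}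
      \<subseteq> build m k ` ?Ls"
    proof
      fix T assume "T \<in> {T. ssyt m (lam_shape m k) T \<and>
        (\<forall>a \<in> {1..m}. \<forall>b \<in> {1..m}. content m (lam_shape m k) T a = content m (lam_shape m k) T b)}"
      then obtain L where "length L = k \<and> sorted L \<and> set L \<subseteq> {2..m} \<and> T = build m k L"
        using S_build[OF assms] by blast
      then show "T \<in> build m k ` ?Ls" by blast
    qed
  qed
  then have "zero_weight_mult m k = card (build m k ` ?Ls)" unfolding zero_weight_mult_def by simp
  also have "\<dots> = card ?Ls" by (rule card_image) (rule build_inj)
  also have "\<dots> = (k + m - 2) choose k" by (rule card_Ls[OF assms])
  finally show ?thesis .
qed

end
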